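(* Let $\bar\alpha\in\mathcal{P}$ and $\bar\ell\in\mathcal{L}$. The subspace $$V_0=\langle e_{\alpha\alpha},\ e^1_{\bar\alpha}-e^1_\alpha,\ e^2_{\bar\alpha}-e^2_\alpha,\ e_{\bar\ell}-e_\ell\mid \alpha\in\mathcal{P},\ \ell\in\mathcal{L}\rangle$$ of $V$ has dimension $4(q^2+q)+1$ and is contained in the right kernel of $M$; in particular $V_0$ is contained in the kernel of $N=M^TM$.
   Context: $q$ is a prime power, $G=\mathrm{PGL}_3(q)$ acts on the point set $\mathcal{P}$ (the $1$-dimensional subspaces of $\mathrm{GF}(q)^3$) and line set $\mathcal{L}$ (the $2$-dimensional subspaces, viewed as sets of points) of $\mathrm{PG}_2(q)$. $M$ is the $\{0,1\}$-matrix with rows indexed by the derangements $g\in G$ (elements fixing no point), columns indexed by $(\alpha,\beta)\in\mathcal{P}^2$, and $M_{g,(\alpha,\beta)}=1$ iff $\alpha^g=\beta$. $V$ is the complex vector space with basis $\{e_{\alpha\beta}:(\alpha,\beta)\in\mathcal{P}^2\}$. $e^1_\alpha=\sum_{\beta\in\mathcal{P}}e_{\alpha\beta}$, $e^2_\alpha=\sum_{\beta\in\mathcal{P}}e_{\beta\alpha}$, $e_\ell=\sum_{\beta,\beta'\in\ell}e_{\beta\beta'}$. *)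

theory Defs
  imports "HOL-Analysis.Analysis" "HOL-Library.Function_Algebras"
begin

text \<open>Projective plane PG(2,q) over a finite field 'a (q = CARD('a)).
  Vectors of GF(q)^3 are elements of type 'a^3.\<close>

definition pg_point_of :: "('a::field)^3 \<Rightarrow> ('a^3) set" where
  "pg_point_of v = {x. \<exists>c. x = (\<chi> i. c * v $ i)}"

definition pg_points :: "('a::field^3) set set" where
  "pg_points = {pg_point_of v | v. v \<noteq> 0}"

definition pg_span2 :: "('a::field)^3 \<Rightarrow> 'a^3 \<Rightarrow> ('a^3) set" where
  "pg_span2 u w = {x. \<exists>a b. x = (\<chi> i. a * u $ i + b * w $ i)}"

definition pg_lines :: "('a::field^3) set set set" where
  "pg_lines = {{p \<in> pg_points. p \<subseteq> pg_span2 u w} | u w.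
                 u \<noteq> 0 \<and> w \<notin> pg_point_of u}"

text \<open>PGL_3(q), represented faithfully as the permutation group it induces on the points:
  the map induced by an invertible matrix A is alpha |-> A alpha.\<close>
definition pgl3 :: "(('a::field^3) set \<Rightarrow> ('a^3) set) set" where
  "pgl3 = {restrict (\<lambda>\<alpha>. (\<lambda>x. A *v x) ` \<alpha>) pg_points | A :: 'a^3^3. invertible A}"

definition derangements :: "(('a::field^3) set \<Rightarrow> ('a^3) set) set" where
  "derangements = {g \<in> pgl3. \<forall>\<alpha>\<in>pg_points. g \<alpha> \<noteq> \<alpha>}"

type_synonym 'a Vsp = "(('a^3) set \<times> ('a^3) set) \<Rightarrow> complex"

definition Mmat :: "(('a::field^3) set \<Rightarrow> ('a^3) set) \<Rightarrow> ('a^3) set \<times> ('a^3) set \<Rightarrow> complex" where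
  "Mmat g ab = (if fst ab \<in> pg_points \<and> snd ab \<in> pg_points \<and> g (fst ab) = snd ab then 1 else 0)"

definition M_apply :: "('a::{finite,field}) Vsp \<Rightarrow> (('a^3) set \<Rightarrow> ('a^3) set) \<Rightarrow> complex" where
  "M_apply v g = (\<Sum>ab \<in> pg_points \<times> pg_points. Mmat g ab * v ab)"

definition N_apply :: "('a::{finite,field}) Vsp \<Rightarrow> 'a Vsp" where
  "N_apply v ab = (\<Sum>g \<in> derangements. Mmat g ab * M_apply v g)"

definition right_kernel_M :: "('a::{finite,field}) Vsp set" where
  "right_kernel_M = {v. (\<forall>ab. ab \<notin> pg_points \<times> pg_points \<longrightarrow> v ab = 0)
                        \<and> (\<forall>g \<in> derangements. M_apply v g = 0)}"

definition kernel_N :: "('a::{finite,field}) Vsp set" where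
  "kernel_N = {v. (\<forall>ab. ab \<notin> pg_points \<times> pg_points \<longrightarrow> v ab = 0)
                  \<and> (\<forall>ab \<in> pg_points \<times> pg_points. N_apply v ab = 0)}"

definition e_pair :: "('a::field^3) set \<Rightarrow> ('a^3) set \<Rightarrow> 'a Vsp" where
  "e_pair \<alpha> \<beta> = (\<lambda>ab. if ab = (\<alpha>, \<beta>) then 1 else 0)"

definition e1 :: "('a::field^3) set \<Rightarrow> 'a Vsp" where
  "e1 \<alpha> = (\<lambda>(x, y). if x = \<alpha> \<and> y \<in> pg_points then 1 else 0)"

definition e2 :: "('a::field^3) set \<Rightarrow> 'a Vsp" where
  "e2 \<alpha> = (\<lambda>(x, y). if x \<in> pg_points \<and> y = \<alpha> then 1 else 0)"

definition e_line :: "('a::field^3) set set \<Rightarrow> 'a Vsp" where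
  "e_line l = (\<lambda>(x, y). if x \<in> l \<and> y \<in> l then 1 else 0)"

definition cscale :: "complex \<Rightarrow> 'a Vsp \<Rightarrow> 'a Vsp" where
  "cscale c f = (\<lambda>x. c * f x)"

definition V0 :: "('a::field^3) set \<Rightarrow> ('a^3) set set \<Rightarrow> 'a Vsp set" where
  "V0 \<alpha>b lb = module.span cscale
     ({e_pair \<alpha> \<alpha> | \<alpha>. \<alpha> \<in> pg_points}
      \<union> {e1 \<alpha>b - e1 \<alpha> | \<alpha>. \<alpha> \<in> pg_points}
      \<union> {e2 \<alpha>b - e2 \<alpha> | \<alpha>. \<alpha> \<in> pg_points}
      \<union> {e_line lb - e_line l | l. l \<in> pg_lines})"

end

theory Submission
  imports Defs
begin


lemma vexp: "(\<chi> i. a * u $ i + b * w $ i) = a *s u + b *s w"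
  by (simp add: vec_eq_iff)

lemma pt_mem: "x \<in> pg_point_of v \<longleftrightarrow> (\<exists>c. x = c *s v)"
  by (simp add: pg_point_of_def vector_scalar_mult_def)

lemma sp_mem: "x \<in> pg_span2 u w \<longleftrightarrow> (\<exists>a b. x = a *s u + b *s w)"
  by (simp add: pg_span2_def vexp)

lemma pt_zero[simp]: "0 \<in> pg_point_of v"
  unfolding pt_mem by (rule exI[of _ 0]) simp

lemma pt_self[simp]: "v \<in> pg_point_of v"
  unfolding pt_mem by (rule exI[of _ 1]) simp

lemma pt_range: "pg_point_of v = range (\<lambda>c. c *s v)"
  by (auto simp: pt_mem intro: rangeI)

lemma smult_cancel:
  fixes v :: "'a::field^3"
  assumes "v \<noteq> 0" "c *s v = d *s v" shows "c = d"
proof -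
  have "(c - d) *s v = 0" using assms(2) by (simp add: vec_eq_iff algebra_simps)
  thus ?thesis using assms(1) by simp
qed

lemma pt_card:
  fixes v :: "'a::{finite,field}^3"
  assumes "v \<noteq> 0" shows "card (pg_point_of v) = CARD('a)"
proof -
  have "inj (\<lambda>c. c *s v)" using smult_cancel[OF assms] by (auto intro: injI)
  thus ?thesis unfolding pt_range by (simp add: card_image)
qed

lemma pt_eq:
  fixes v :: "'a::field^3"
  assumes "w \<in> pg_point_of v" "w \<noteq> 0" shows "pg_point_of w = pg_point_of v"
proof -
  obtain c where c: "w = c *s v" using assms(1) by (auto simp: pt_mem)
  hence c0: "c \<noteq> 0" using assms(2) by auto
  show ?thesis
  proof (rule set_eqI)
    fix x
    show "x \<in> pg_point_of w \<longleftrightarrow> x \<in> pg_point_of v"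
    proof
      assume "x \<in> pg_point_of w"
      then obtain d where "x = d *s w" by (auto simp: pt_mem)
      hence "x = (d*c) *s v" by (simp add: c vector_smult_assoc)
      thus "x \<in> pg_point_of v" by (auto simp: pt_mem)
    next
      assume "x \<in> pg_point_of v"
      then obtain d where "x = d *s v" by (auto simp: pt_mem)
      hence "x = (d / c) *s w" using c0 by (simp add: c vector_smult_assoc)
      thus "x \<in> pg_point_of w" by (auto simp: pt_mem)
    qed
  qed
qed

lemma points_mem: "p \<in> pg_points \<longleftrightarrow> (\<exists>v. v \<noteq> 0 \<and> p = pg_point_of v)"
  by (auto simp: pg_points_def)

lemma point_rep:
  assumes "p \<in> pg_points" "x \<in> p" "x \<noteq> 0" shows "p = pg_point_of x"
  using assms pt_eq by (fastforce simp: points_mem)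

lemma point_zero: "p \<in> pg_points \<Longrightarrow> 0 \<in> p"
  by (auto simp: points_mem)

lemma point_nonzero: "p \<in> pg_points \<Longrightarrow> \<exists>x\<in>p. x \<noteq> 0"
  by (auto simp: points_mem)

lemma count_pts:
  fixes S :: "('a::{finite,field}^3) set"
  assumes "0 \<in> S" "\<And>x c. x \<in> S \<Longrightarrow> c *s x \<in> S"
  shows "(CARD('a) - 1) * card {p \<in> pg_points. p \<subseteq> S} = card S - 1"
proof -
  let ?C = "{p \<in> pg_points. p \<subseteq> S}"
  have inj: "inj_on (\<lambda>p. p - {0}) ?C"
  proof (rule inj_onI)
    fix p p' assume "p \<in> ?C" "p' \<in> ?C" "p - {0} = p' - {0}"
    thus "p = p'" using point_zero by blast
  qed
  have U: "\<Union>((\<lambda>p. p - {0}) ` ?C) = S - {0}"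
  proof
    show "\<Union>((\<lambda>p. p - {0}) ` ?C) \<subseteq> S - {0}" by auto
  next
    show "S - {0} \<subseteq> \<Union>((\<lambda>p. p - {0}) ` ?C)"
    proof
      fix x assume x: "x \<in> S - {0}"
      have "pg_point_of x \<in> ?C" using x assms(2) by (auto simp: points_mem pt_mem)
      moreover have "x \<in> pg_point_of x - {0}" using x by simp
      ultimately show "x \<in> \<Union>((\<lambda>p. p - {0}) ` ?C)" by blast
    qed
  qed
  have "(CARD('a) - 1) * card ((\<lambda>p. p - {0}) ` ?C) = card (\<Union>((\<lambda>p. p - {0}) ` ?C))"
  proof (rule card_partition)
    show "finite ((\<lambda>p. p - {0}) ` ?C)" by simp
    show "finite (\<Union>((\<lambda>p. p - {0}) ` ?C))" by simp
    have cc: "card c = CARD('a) - 1" if cin: "c \<in> (\<lambda>p. p - {0}) ` ?C" for c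
    proof -
      obtain p where p: "p \<in> ?C" "c = p - {0}" using cin by auto
      then obtain v where v: "v \<noteq> 0" "p = pg_point_of v" by (auto simp: points_mem)
      show "card c = CARD('a) - 1" using p v by (simp add: pt_card)
    qed
    thus "\<And>c. c \<in> (\<lambda>p. p - {0}) ` ?C \<Longrightarrow> card c = CARD('a) - 1" by blast
    show "\<And>c1 c2. c1\<in>(\<lambda>p. p - {0}) ` ?C \<Longrightarrow> c2\<in>(\<lambda>p. p - {0}) ` ?C \<Longrightarrow> c1 \<noteq> c2 \<Longrightarrow> c1 \<inter> c2 = {}"
    proof -
      fix c1 c2 assume "c1 \<in> (\<lambda>p. p - {0}) ` ?C" "c2 \<in> (\<lambda>p. p - {0}) ` ?C" "c1 \<noteq> c2"
      then obtain p1 p2 where "p1 \<in> pg_points" "p2 \<in> pg_points" "c1 = p1 - {0}" "c2 = p2 - {0}"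
        by auto
      thus "c1 \<inter> c2 = {}" using \<open>c1 \<noteq> c2\<close> point_rep by blast
    qed
  qed
  thus ?thesis using inj U assms(1) by (simp add: card_image card_Diff_singleton)
qed

lemma card_ge2: "CARD('a::{finite,field}) \<ge> 2"
proof -
  have "{0,1::'a} \<subseteq> UNIV" by simp
  hence "card {0,1::'a} \<le> CARD('a)" by (intro card_mono) auto
  thus ?thesis by simp
qed

lemma card_points: "card (pg_points :: ('a::{finite,field}^3) set set) = CARD('a)^2 + CARD('a) + 1"
proof -
  let ?q = "CARD('a)"
  have "(?q - 1) * card {p \<in> (pg_points :: ('a^3) set set). p \<subseteq> UNIV} = card (UNIV :: ('a^3) set) - 1"
    by (rule count_pts) auto
  hence e: "(?q - 1) * card (pg_points :: ('a^3) set set) = ?q^3 - 1" by simp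
  obtain m where m: "?q = Suc (Suc m)" using card_ge2[where 'a='a] by (metis add_2_eq_Suc le_iff_add)
  have "(?q - 1) * (?q^2 + ?q + 1) = ?q^3 - 1" unfolding m by (simp add: algebra_simps power2_eq_square power3_eq_cube)
  with e have eq: "(?q - 1) * card (pg_points :: ('a^3) set set) = (?q - 1) * (?q^2 + ?q + 1)" by simp
  have ne: "?q - 1 \<noteq> 0" using m by simp
  from eq ne show ?thesis by (metis mult_left_cancel)
qed



abbreviation indep :: "'a::field^3 \<Rightarrow> 'a^3 \<Rightarrow> bool" where
  "indep u w \<equiv> u \<noteq> 0 \<and> w \<notin> pg_point_of u"

definition lineof :: "'a::field^3 \<Rightarrow> 'a^3 \<Rightarrow> ('a^3) set set" where
  "lineof u w = {p \<in> pg_points. p \<subseteq> pg_span2 u w}"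

lemma lines_mem: "l \<in> pg_lines \<longleftrightarrow> (\<exists>u w. indep u w \<and> l = lineof u w)"
  by (auto simp: pg_lines_def lineof_def)

lemma indep_comb:
  assumes "indep u w" "a *s u + b *s w = 0" shows "a = 0 \<and> b = 0"
proof -
  have "b = 0"
  proof (rule ccontr)
    assume b: "b \<noteq> 0"
    have "w = (- a / b) *s u" using assms(2) b
      by (simp add: vec_eq_iff field_simps) (metis add.commute add_eq_0_iff2 minus_mult_left vector_add_component vector_smult_component zero_index)
    hence "w \<in> pg_point_of u" unfolding pt_mem by blast
    thus False using assms(1) by simp
  qed
  thus ?thesis using assms by simp
qed

lemma sp_card:
  fixes u w :: "'a::{finite,field}^3"
  assumes "indep u w" shows "card (pg_span2 u w) = CARD('a)^2"
proof -
  have e: "pg_span2 u w = (\<lambda>(a,b). a *s u + b *s w) ` UNIV" by (fastforce simp: sp_mem image_iff)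
  have "inj (\<lambda>(a::'a,b::'a). a *s u + b *s w)"
  proof (rule injI, clarsimp)
    fix a b a' b' :: 'a assume "a *s u + b *s w = a' *s u + b' *s w"
    hence "(a - a') *s u + (b - b') *s w = 0" by (simp add: vec_eq_iff algebra_simps)
    from indep_comb[OF assms this] show "a = a' \<and> b = b'" by simp
  qed
  hence "card (pg_span2 u w) = card (UNIV :: ('a \<times> 'a) set)" unfolding e by (simp add: card_image)
  thus ?thesis by (simp add: power2_eq_square)
qed

lemma sp_comb:
  assumes "x \<in> pg_span2 u w" "y \<in> pg_span2 u w" shows "a *s x + b *s y \<in> pg_span2 u w"
proof -
  obtain a1 b1 a2 b2 where "x = a1 *s u + b1 *s w" "y = a2 *s u + b2 *s w" using assms by (auto simp: sp_mem)
  hence "a *s x + b *s y = (a*a1 + b*a2) *s u + (a*b1 + b*b2) *s w" by (simp add: vec_eq_iff algebra_simps)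
  thus ?thesis unfolding sp_mem by blast
qed

lemma sp_u[simp]: "u \<in> pg_span2 u w" unfolding sp_mem by (rule exI[of _ 1], rule exI[of _ 0]) simp
lemma sp_w[simp]: "w \<in> pg_span2 u w" unfolding sp_mem by (rule exI[of _ 0], rule exI[of _ 1]) simp
lemma sp_zero[simp]: "0 \<in> pg_span2 u w" unfolding sp_mem by (rule exI[of _ 0], rule exI[of _ 0]) simp

lemma sp_scale: "x \<in> pg_span2 u w \<Longrightarrow> c *s x \<in> pg_span2 u w"
  using sp_comb[of x u w x c 0] by simp
lemma sp_add: "x \<in> pg_span2 u w \<Longrightarrow> y \<in> pg_span2 u w \<Longrightarrow> x + y \<in> pg_span2 u w"
  using sp_comb[of x u w y 1 1] by simp
lemma sp_diff: "x \<in> pg_span2 u w \<Longrightarrow> y \<in> pg_span2 u w \<Longrightarrow> x - y \<in> pg_span2 u w"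
  using sp_comb[of x u w y 1 "-1"] by (simp add: vector_smult_lneg)

lemma sp_sub: "x \<in> pg_span2 u w \<Longrightarrow> y \<in> pg_span2 u w \<Longrightarrow> pg_span2 x y \<subseteq> pg_span2 u w"
  using sp_comb by (auto simp: sp_mem[of _ x y])

lemma sp_eq:
  fixes u w :: "'a::{finite,field}^3"
  assumes "indep u w" "indep x y" "x \<in> pg_span2 u w" "y \<in> pg_span2 u w"
  shows "pg_span2 x y = pg_span2 u w"
  using card_subset_eq[OF finite sp_sub[OF assms(3,4)]] sp_card[OF assms(1)] sp_card[OF assms(2)] by simp

lemma pt_sub_sp: "pg_point_of x \<subseteq> pg_span2 u w \<longleftrightarrow> x \<in> pg_span2 u w"
  using sp_scale pt_self by (auto simp: pt_mem)

lemma line_union: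
  assumes "indep u w" shows "\<Union>(lineof u w) = pg_span2 u w"
proof
  show "\<Union>(lineof u w) \<subseteq> pg_span2 u w" by (auto simp: lineof_def)
  show "pg_span2 u w \<subseteq> \<Union>(lineof u w)"
  proof
    fix x assume x: "x \<in> pg_span2 u w"
    show "x \<in> \<Union>(lineof u w)"
    proof (cases "x = 0")
      case True
      have "pg_point_of u \<in> lineof u w" using assms by (auto simp: lineof_def points_mem pt_sub_sp)
      thus ?thesis using True pt_zero by blast
    next
      case False
      have "pg_point_of x \<in> lineof u w" using x False by (auto simp: lineof_def points_mem pt_sub_sp)
      thus ?thesis using pt_self by blast
    qed
  qed
qed

lemma line_card:
  fixes u w :: "'a::{finite,field}^3"
  assumes "indep u w" shows "card (lineof u w) = CARD('a) + 1"
proof -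
  let ?q = "CARD('a)"
  have "(?q - 1) * card {p \<in> (pg_points :: ('a^3) set set). p \<subseteq> pg_span2 u w} = card (pg_span2 u w) - 1"
    by (rule count_pts) (auto simp: sp_scale)
  hence e: "(?q - 1) * card (lineof u w) = ?q^2 - 1" by (simp add: lineof_def sp_card[OF assms])
  obtain m where m: "?q = Suc (Suc m)" using card_ge2[where 'a='a] by (metis add_2_eq_Suc le_iff_add)
  have "(?q - 1) * (?q + 1) = ?q^2 - 1" unfolding m by (simp add: algebra_simps power2_eq_square)
  with e have eq: "(?q - 1) * card (lineof u w) = (?q - 1) * (?q + 1)" by simp
  have ne: "?q - 1 \<noteq> 0" using m by simp
  from eq ne show ?thesis by (metis mult_left_cancel)
qed

lemma lines_card: "l \<in> pg_lines \<Longrightarrow> card (l :: ('a::{finite,field}^3) set set) = CARD('a) + 1"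
  using line_card by (auto simp: lines_mem)

lemma line_sub: "l \<in> pg_lines \<Longrightarrow> l \<subseteq> pg_points"
  by (auto simp: lines_mem lineof_def)

lemma indep_pts:
  assumes "v \<noteq> 0" "v' \<noteq> 0" "pg_point_of v \<noteq> pg_point_of v'" shows "indep v v'"
  using assms pt_eq by metis

lemma two_pts_line:
  assumes "x \<in> pg_points" "y \<in> pg_points" "x \<noteq> y"
  shows "\<exists>l\<in>pg_lines. x \<in> l \<and> y \<in> l"
proof -
  obtain v v' where v: "v \<noteq> 0" "x = pg_point_of v" "v' \<noteq> 0" "y = pg_point_of v'"
    using assms by (auto simp: points_mem)
  hence i: "indep v v'" using assms indep_pts by metis
  have "x \<in> lineof v v'" "y \<in> lineof v v'" using assms v by (auto simp: lineof_def pt_sub_sp)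
  moreover have "lineof v v' \<in> pg_lines" using i unfolding lines_mem by blast
  ultimately show ?thesis by blast
qed

lemma line_unique:
  fixes x :: "('a::{finite,field}^3) set"
  assumes "x \<in> pg_points" "y \<in> pg_points" "x \<noteq> y" "l \<in> pg_lines" "l' \<in> pg_lines"
    "x \<in> l" "y \<in> l" "x \<in> l'" "y \<in> l'"
  shows "l = l'"
proof -
  obtain v v' where v: "v \<noteq> 0" "x = pg_point_of v" "v' \<noteq> 0" "y = pg_point_of v'"
    using assms by (auto simp: points_mem)
  hence i: "indep v v'" using assms indep_pts by metis
  have key: "l = lineof v v'" if lin: "l \<in> pg_lines" "x \<in> l" "y \<in> l" for l
  proof -
    obtain u w where uw: "indep u w" "l = lineof u w" using lin by (auto simp: lines_mem)
    have "v \<in> pg_span2 u w" "v' \<in> pg_span2 u w" using lin uw v by (auto simp: lineof_def pt_sub_sp)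
    hence "pg_span2 v v' = pg_span2 u w" using sp_eq uw i by blast
    thus ?thesis using uw by (simp add: lineof_def)
  qed
  show ?thesis using key assms by metis
qed

lemma lines_meet:
  fixes l :: "('a::{finite,field}^3) set set"
  assumes "l \<in> pg_lines" "l' \<in> pg_lines" shows "\<exists>p. p \<in> l \<and> p \<in> l'"
proof -
  obtain u w u' w' where uw: "indep u w" "l = lineof u w" "indep u' w'" "l' = lineof u' w'"
    using assms by (auto simp: lines_mem)
  let ?W = "pg_span2 u w" and ?W' = "pg_span2 u' w'"
  have "\<not> inj_on (\<lambda>(x,y). x - y) (?W \<times> ?W')"
  proof
    assume inj: "inj_on (\<lambda>(x,y). x - y) (?W \<times> ?W')"
    have "card (?W \<times> ?W') \<le> card (UNIV :: ('a^3) set)"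
      by (rule card_inj_on_le[OF inj]) auto
    moreover have "card (?W \<times> ?W') = CARD('a)^3 * CARD('a)"
      using sp_card[OF uw(1)] sp_card[OF uw(3)] by (simp add: card_cartesian_product power2_eq_square power3_eq_cube)
    moreover have "CARD('a)^3 * 1 < CARD('a)^3 * CARD('a)" using card_ge2[where 'a='a] by (intro mult_strict_left_mono) auto
    ultimately show False by simp
  qed
  then obtain x y x' y' where xy: "x \<in> ?W" "y \<in> ?W'" "x' \<in> ?W" "y' \<in> ?W'" "(x,y) \<noteq> (x',y')"
    "x - y = x' - y'" unfolding inj_on_def by auto
  let ?v = "x - x'"
  have v1: "?v = y - y'" using xy(6) by (simp add: algebra_simps)
  have v0: "?v \<noteq> 0"
  proof
    assume "?v = 0"
    hence "x = x'" "y = y'" using v1 by auto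
    thus False using xy(5) by simp
  qed
  have "?v \<in> ?W" using sp_diff[OF xy(1,3)] .
  moreover have "?v \<in> ?W'" using sp_diff[OF xy(2,4)] v1 by simp
  ultimately have "?v \<in> ?W" "?v \<in> ?W'" by auto
  moreover have "pg_point_of ?v \<in> pg_points" unfolding points_mem using v0 by blast
  ultimately have "pg_point_of ?v \<in> l" "pg_point_of ?v \<in> l'" using uw
    by (auto simp: lineof_def pt_sub_sp)
  thus ?thesis by blast
qed

lemma third_point:
  fixes l :: "('a::{finite,field}^3) set set"
  assumes "l \<in> pg_lines" shows "\<exists>z\<in>l. z \<noteq> x \<and> z \<noteq> y"
proof (rule ccontr)
  assume "\<not> ?thesis"
  hence "l \<subseteq> {x,y}" by auto
  hence "card l \<le> card {x,y}" by (intro card_mono) auto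
  also have "\<dots> \<le> 2" by (simp add: card_insert_if)
  finally have "card l \<le> 2" .
  thus False using lines_card[OF assms] card_ge2[where 'a='a] by simp
qed



lemma card_offdiag:
  assumes "finite S"
  shows "card {(x,y). x \<in> S \<and> y \<in> S \<and> x \<noteq> y} = card S * card S - card S"
proof -
  have e: "{(x,y). x \<in> S \<and> y \<in> S \<and> x \<noteq> y} = S \<times> S - (\<lambda>x. (x,x)) ` S" by auto
  have "card ((\<lambda>x. (x,x)) ` S) = card S" by (rule card_image) (auto intro: inj_onI)
  moreover have "card ((S \<times> S) - (\<lambda>x. (x,x)) ` S) = card (S \<times> S) - card ((\<lambda>x. (x,x)) ` S)"
    by (rule card_Diff_subset) (use assms in auto)
  ultimately show ?thesis unfolding e using assms by (simp add: card_cartesian_product)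
qed

lemma card_lines: "card (pg_lines :: ('a::{finite,field}^3) set set set) = CARD('a)^2 + CARD('a) + 1"
proof -
  let ?q = "CARD('a)"
  let ?P = "pg_points :: ('a^3) set set" and ?L = "pg_lines :: ('a^3) set set set"
  let ?OD = "\<lambda>S. {(x,y). x \<in> S \<and> y \<in> S \<and> x \<noteq> y}"
  have U: "?OD ?P = (\<Union>l\<in>?L. ?OD l)"
  proof
    show "?OD ?P \<subseteq> (\<Union>l\<in>?L. ?OD l)"
    proof
      fix xy assume "xy \<in> ?OD ?P"
      then obtain x y where xy: "xy = (x,y)" "x \<in> ?P" "y \<in> ?P" "x \<noteq> y" by auto
      then obtain l where "l \<in> ?L" "x \<in> l" "y \<in> l" using two_pts_line by blast
      thus "xy \<in> (\<Union>l\<in>?L. ?OD l)" using xy by blast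
    qed
    show "(\<Union>l\<in>?L. ?OD l) \<subseteq> ?OD ?P"
    proof
      fix xy assume "xy \<in> (\<Union>l\<in>?L. ?OD l)"
      then obtain x y l where xy: "xy = (x,y)" "l \<in> ?L" "x \<in> l" "y \<in> l" "x \<noteq> y" by blast
      hence "x \<in> ?P" "y \<in> ?P" using line_sub by blast+
      thus "xy \<in> ?OD ?P" using xy by blast
    qed
  qed
  have "card (\<Union>l\<in>?L. ?OD l) = (\<Sum>l\<in>?L. card (?OD l))"
  proof (rule card_UN_disjoint)
    show "finite ?L" by simp
    show "\<forall>i\<in>?L. finite (?OD i)" by simp
    show "\<forall>i\<in>?L. \<forall>j\<in>?L. i \<noteq> j \<longrightarrow> ?OD i \<inter> ?OD j = {}"
    proof (intro ballI impI)
      fix i j assume ij: "i \<in> ?L" "j \<in> ?L" "i \<noteq> j"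
      show "?OD i \<inter> ?OD j = {}"
      proof (rule ccontr)
        assume "?OD i \<inter> ?OD j \<noteq> {}"
        then obtain x y where "x \<in> i" "y \<in> i" "x \<in> j" "y \<in> j" "x \<noteq> y" by auto
        moreover have "x \<in> ?P" "y \<in> ?P" using calculation ij line_sub by auto
        ultimately show False using line_unique ij by metis
      qed
    qed
  qed
  also have "\<dots> = (\<Sum>l\<in>?L. (?q+1)*(?q+1) - (?q+1))"
    by (rule sum.cong) (auto simp: card_offdiag lines_card)
  also have "\<dots> = card ?L * ((?q+1)*(?q+1) - (?q+1))" by simp
  finally have e1: "card (?OD ?P) = card ?L * ((?q+1)*(?q+1) - (?q+1))" using U by simp
  have e2: "card (?OD ?P) = (?q^2 + ?q + 1) * (?q^2 + ?q + 1) - (?q^2 + ?q + 1)"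
    using card_offdiag[of ?P] card_points[where 'a='a] by simp
  have a: "(?q+1)*(?q+1) - (?q+1) = ?q * (?q + 1)" by (simp add: algebra_simps)
  have b: "(?q^2 + ?q + 1) * (?q^2 + ?q + 1) - (?q^2 + ?q + 1) = (?q^2 + ?q + 1) * (?q * (?q + 1))"
    by (simp add: algebra_simps power2_eq_square)
  have "card ?L * (?q * (?q + 1)) = (?q^2 + ?q + 1) * (?q * (?q + 1))" using e1 e2 a b by simp
  moreover have "?q * (?q + 1) \<noteq> 0" using card_ge2[where 'a='a] by simp
  ultimately show ?thesis by (metis mult_right_cancel)
qed

lemma mv_smult: "A *v (c *s x) = c *s (A *v (x :: 'a::comm_ring_1^'n))"
  by (simp add: vec_eq_iff matrix_vector_mult_def sum_distrib_left mult.left_commute)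

lemma img_pt: "(\<lambda>x. A *v x) ` pg_point_of v = pg_point_of (A *v (v :: 'a::field^3))"
  by (simp add: pt_range image_image mv_smult)

lemma eigen:
  fixes u w :: "'a::{finite,field}^3" and C :: "'a^3^3"
  assumes ind: "indep u w" and inv: "\<And>x. x \<in> pg_span2 u w \<Longrightarrow> C *v x \<in> pg_span2 u w"
  shows "\<exists>v \<mu>. v \<noteq> 0 \<and> C *v v = \<mu> *s v"
proof -
  let ?W = "pg_span2 u w"
  have cW: "card ?W < card (UNIV :: ('a^3) set)"
  proof -
    have "CARD('a)^2 * 1 < CARD('a)^2 * CARD('a)" using card_ge2[where 'a='a] by (intro mult_strict_left_mono) auto
    thus ?thesis using sp_card[OF ind] by (simp add: power2_eq_square power3_eq_cube)
  qed
  have "\<not> UNIV \<subseteq> ?W"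
  proof
    assume "UNIV \<subseteq> ?W"
    hence "card (UNIV :: ('a^3) set) \<le> card ?W" by (intro card_mono) auto
    thus False using cW by simp
  qed
  then obtain z where z: "z \<notin> ?W" by blast
  let ?T = "\<lambda>(a::'a,b::'a,c::'a). a *s u + b *s w + c *s z"
  have injT: "inj ?T"
  proof (rule injI, clarsimp)
    fix a b c a' b' c' :: 'a
    assume e: "a *s u + b *s w + c *s z = a' *s u + b' *s w + c' *s z"
    have cc: "c = c'"
    proof (rule ccontr)
      assume "c \<noteq> c'"
      have e2: "(c - c') *s z = (a' - a) *s u + (b' - b) *s w"
        using e by (simp add: vec_eq_iff algebra_simps)
      have one: "(1/(c - c')) * (c - c') = 1" using \<open>c \<noteq> c'\<close> by simp
      have "z = (1/(c - c')) *s ((c - c') *s z)" by (simp only: vector_smult_assoc one vector_smult_lid)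
      hence "z = (1/(c - c')) *s ((a' - a) *s u + (b' - b) *s w)" by (simp only: e2)
      moreover have "(1/(c - c')) *s ((a' - a) *s u + (b' - b) *s w) \<in> ?W"
        by (intro sp_scale sp_comb) auto
      ultimately show False using z by simp
    qed
    hence "(a - a') *s u + (b - b') *s w = 0" using e by (simp add: vec_eq_iff algebra_simps)
    from indep_comb[OF ind this] cc show "a = a' \<and> b = b' \<and> c = c'" by simp
  qed
  have surjT: "range ?T = UNIV"
  proof (rule card_subset_eq)
    show "finite (UNIV :: ('a^3) set)" by simp
    show "range ?T \<subseteq> UNIV" by simp
    have "card (range ?T) = card (UNIV :: ('a \<times> 'a \<times> 'a) set)" using injT by (simp add: card_image)
    thus "card (range ?T) = card (UNIV :: ('a^3) set)" by (simp add: power3_eq_cube)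
  qed
  obtain a0 b0 \<mu> where cz: "C *v z = a0 *s u + b0 *s w + \<mu> *s z"
    using surjT by (metis (no_types, lifting) UNIV_I case_prod_conv imageE prod.collapse)
  let ?D = "\<lambda>x. C *v x - \<mu> *s x"
  have DW: "?D x \<in> ?W" for x
  proof -
    obtain a b c where x: "x = a *s u + b *s w + c *s z"
      using surjT by (metis (no_types, lifting) UNIV_I case_prod_conv imageE prod.collapse)
    have "?D x = (a *s (C *v u) + b *s (C *v w)) + (c *s (a0 *s u + b0 *s w) - \<mu> *s (a *s u + b *s w))"
      unfolding x by (simp add: algebra_simps mv_smult cz vec_eq_iff)
    moreover have "a *s (C *v u) + b *s (C *v w) \<in> ?W" by (intro sp_comb inv) auto
    moreover have "c *s (a0 *s u + b0 *s w) \<in> ?W" by (intro sp_scale sp_comb) auto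
    moreover have "\<mu> *s (a *s u + b *s w) \<in> ?W" by (intro sp_scale sp_comb) auto
    ultimately show ?thesis by (simp add: sp_add sp_diff)
  qed
  have "\<not> inj ?D"
  proof
    assume "inj ?D"
    hence "card (range ?D) = card (UNIV :: ('a^3) set)" by (simp add: card_image)
    moreover have "card (range ?D) \<le> card ?W" using DW by (intro card_mono) auto
    ultimately show False using cW by simp
  qed
  then obtain x y where xy: "x \<noteq> y" "?D x = ?D y" unfolding inj_def by blast
  have "C *v (x - y) = \<mu> *s (x - y)" using xy(2) by (simp add: algebra_simps vec_eq_iff)
  moreover have "x - y \<noteq> 0" using xy(1) by simp
  ultimately show ?thesis by blast
qed



locale coll =
  fixes A B :: "'a::{finite,field}^3^3"
  assumes AB: "A ** B = mat 1" and BA: "B ** A = mat 1"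
begin

definition gg :: "('a^3) set \<Rightarrow> ('a^3) set" where
  "gg = restrict (\<lambda>\<alpha>. (\<lambda>x. A *v x) ` \<alpha>) pg_points"

lemma cancel1[simp]: "B *v (A *v x) = x"
  by (simp add: matrix_vector_mul_assoc BA)
lemma cancel2[simp]: "A *v (B *v x) = x"
  by (simp add: matrix_vector_mul_assoc AB)

lemma A_nz: "x \<noteq> 0 \<Longrightarrow> A *v x \<noteq> 0"
  by (metis cancel1 matrix_vector_mult_0_right)
lemma B_nz: "x \<noteq> 0 \<Longrightarrow> B *v x \<noteq> 0"
  by (metis cancel2 matrix_vector_mult_0_right)

lemma pt_in: "v \<noteq> 0 \<Longrightarrow> pg_point_of v \<in> pg_points"
  unfolding points_mem by blast

lemma g_pt: "v \<noteq> 0 \<Longrightarrow> gg (pg_point_of v) = pg_point_of (A *v v)"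
  by (simp add: gg_def pt_in img_pt)

lemma g_P: "p \<in> pg_points \<Longrightarrow> gg p \<in> pg_points"
proof -
  assume "p \<in> pg_points"
  then obtain v where v: "v \<noteq> 0" "p = pg_point_of v" by (auto simp: points_mem)
  hence "gg p = pg_point_of (A *v v)" by (simp add: g_pt)
  thus ?thesis using A_nz[OF v(1)] unfolding points_mem by blast
qed

lemma g_inj: "inj_on gg pg_points"
proof (rule inj_onI)
  fix p p' assume p: "p \<in> pg_points" "p' \<in> pg_points" "gg p = gg p'"
  obtain v v' where v: "v \<noteq> 0" "p = pg_point_of v" "v' \<noteq> 0" "p' = pg_point_of v'"
    using p by (auto simp: points_mem)
  have "A *v v' \<in> pg_point_of (A *v v)" using p(3) v g_pt pt_self by metis
  then obtain c where "A *v v' = c *s (A *v v)" by (auto simp: pt_mem)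
  hence "B *v (A *v v') = B *v (c *s (A *v v))" by simp
  hence "v' = c *s v" by (simp add: mv_smult)
  hence "v' \<in> pg_point_of v" by (auto simp: pt_mem)
  thus "p = p'" using v pt_eq by metis
qed

lemma g_surj: "gg ` pg_points = pg_points"
  by (rule endo_inj_surj) (auto simp: g_P g_inj)

lemma A_sp: "A *v v \<in> pg_span2 u w \<longleftrightarrow> v \<in> pg_span2 (B *v u) (B *v w)"
proof
  assume "A *v v \<in> pg_span2 u w"
  then obtain a b where "A *v v = a *s u + b *s w" by (auto simp: sp_mem)
  hence "B *v (A *v v) = B *v (a *s u + b *s w)" by simp
  hence "v = a *s (B *v u) + b *s (B *v w)" by (simp add: matrix_vector_right_distrib mv_smult)
  thus "v \<in> pg_span2 (B *v u) (B *v w)" unfolding sp_mem by blast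
next
  assume "v \<in> pg_span2 (B *v u) (B *v w)"
  then obtain a b where "v = a *s (B *v u) + b *s (B *v w)" by (auto simp: sp_mem)
  hence "A *v v = a *s u + b *s w" by (simp add: matrix_vector_right_distrib mv_smult)
  thus "A *v v \<in> pg_span2 u w" unfolding sp_mem by blast
qed

lemma B_indep: "indep u w \<Longrightarrow> indep (B *v u) (B *v w)"
proof -
  assume i: "indep u w"
  have "B *v u \<noteq> 0" using i B_nz by simp
  moreover have "B *v w \<notin> pg_point_of (B *v u)"
  proof
    assume "B *v w \<in> pg_point_of (B *v u)"
    then obtain c where "B *v w = c *s (B *v u)" by (auto simp: pt_mem)
    hence "A *v (B *v w) = A *v (c *s (B *v u))" by simp
    hence "w = c *s u" by (simp add: mv_smult)
    thus False using i by (auto simp: pt_mem)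
  qed
  ultimately show ?thesis by simp
qed

lemma g_line:
  assumes "indep u w"
  shows "{x \<in> pg_points. gg x \<in> lineof u w} = lineof (B *v u) (B *v w)"
proof (rule set_eqI)
  fix x
  show "x \<in> {x \<in> pg_points. gg x \<in> lineof u w} \<longleftrightarrow> x \<in> lineof (B *v u) (B *v w)"
  proof (cases "x \<in> pg_points")
    case True
    then obtain v where v: "v \<noteq> 0" "x = pg_point_of v" by (auto simp: points_mem)
    have "gg x \<in> lineof u w \<longleftrightarrow> A *v v \<in> pg_span2 u w"
      using v g_P True A_nz by (simp add: lineof_def g_pt pt_sub_sp pt_in)
    also have "\<dots> \<longleftrightarrow> x \<in> lineof (B *v u) (B *v w)"
      using v True by (simp add: A_sp lineof_def pt_sub_sp)
    finally show ?thesis using True by simp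
  next
    case False
    thus ?thesis by (auto simp: lineof_def)
  qed
qed

lemma fixline_eigen:
  assumes l: "l \<in> pg_lines" and fx: "{x \<in> pg_points. gg x \<in> l} = l"
  shows "\<exists>p\<in>pg_points. gg p = p"
proof -
  obtain u w where uw: "indep u w" "l = lineof u w" using l by (auto simp: lines_mem)
  have "lineof (B *v u) (B *v w) = lineof u w" using fx g_line[OF uw(1)] uw(2) by simp
  hence "\<Union>(lineof (B *v u) (B *v w)) = \<Union>(lineof u w)" by simp
  hence spe: "pg_span2 (B *v u) (B *v w) = pg_span2 u w"
    using line_union[OF uw(1)] line_union[OF B_indep[OF uw(1)]] by simp
  have inv: "B *v x \<in> pg_span2 u w" if xin: "x \<in> pg_span2 u w" for x
  proof -
    obtain a b where "x = a *s u + b *s w" using xin by (auto simp: sp_mem)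
    hence "B *v x = a *s (B *v u) + b *s (B *v w)" by (simp add: matrix_vector_right_distrib mv_smult)
    hence "B *v x \<in> pg_span2 (B *v u) (B *v w)" unfolding sp_mem by blast
    thus ?thesis using spe by simp
  qed
  obtain v \<mu> where v: "v \<noteq> 0" "B *v v = \<mu> *s v" using eigen[OF uw(1) inv] by blast
  have mu: "\<mu> \<noteq> 0" using v B_nz by force
  have "v = A *v (\<mu> *s v)" using v(2) cancel2[of v] by simp
  hence "v = \<mu> *s (A *v v)" by (simp add: mv_smult)
  hence "(1/\<mu>) *s v = (1/\<mu>) *s (\<mu> *s (A *v v))" by simp
  also have "\<dots> = A *v v" using mu by (simp add: vector_smult_assoc)
  finally have Av: "A *v v = (1/\<mu>) *s v" by simp
  have "gg (pg_point_of v) = pg_point_of v"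
    using v mu by (simp add: g_pt Av pt_eq pt_mem)
  thus ?thesis using pt_in[OF v(1)] by blast
qed

lemma derange_line:
  assumes der: "\<forall>p\<in>pg_points. gg p \<noteq> p" and l: "l \<in> pg_lines"
  shows "card {x \<in> l. gg x \<in> l} = 1"
proof -
  obtain u w where uw: "indep u w" "l = lineof u w" using l by (auto simp: lines_mem)
  let ?l2 = "{x \<in> pg_points. gg x \<in> l}"
  have l2: "?l2 \<in> pg_lines" using g_line[OF uw(1)] B_indep[OF uw(1)] uw(2) by (auto simp: lines_mem)
  have ne: "?l2 \<noteq> l" using fixline_eigen[OF l] der by blast
  have e: "{x \<in> l. gg x \<in> l} = l \<inter> ?l2" using line_sub[OF l] by blast
  obtain p where p: "p \<in> l" "p \<in> ?l2" using lines_meet[OF l l2] by blast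
  have "l \<inter> ?l2 = {p}"
  proof
    show "{p} \<subseteq> l \<inter> ?l2" using p by blast
    show "l \<inter> ?l2 \<subseteq> {p}"
    proof
      fix p' assume p': "p' \<in> l \<inter> ?l2"
      show "p' \<in> {p}"
      proof (rule ccontr)
        assume "p' \<notin> {p}"
        hence "p' \<noteq> p" by simp
        moreover have "p \<in> pg_points" "p' \<in> pg_points" using p p' by auto
        ultimately have "l = ?l2" using line_unique[OF _ _ _ l l2] p p' by blast
        thus False using ne by simp
      qed
    qed
  qed
  thus ?thesis using e by simp
qed

end

lemma pgl_rep:
  assumes "g \<in> pgl3"
  shows "\<exists>A B. coll A B \<and> g = coll.gg A"
proof -
  obtain A :: "'a::{finite,field}^3^3" where A: "invertible A" "g = restrict (\<lambda>\<alpha>. (\<lambda>x. A *v x) ` \<alpha>) pg_points"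
    using assms unfolding pgl3_def by blast
  obtain B where "A ** B = mat 1" "B ** A = mat 1" using A(1) unfolding invertible_def by blast
  hence c: "coll A B" by (simp add: coll_def)
  moreover have "g = coll.gg A" using A(2) coll.gg_def[OF c] by simp
  ultimately show ?thesis by blast
qed



interpretation cs: vector_space cscale
  by unfold_locales (auto simp: cscale_def fun_eq_iff algebra_simps)

lemma sum_apply_fun: "finite A \<Longrightarrow> (\<Sum>a\<in>A. f a) x = (\<Sum>a\<in>A. f a x)"
  by (induction A rule: finite_induct) auto

lemma pgl_P: "g \<in> pgl3 \<Longrightarrow> p \<in> pg_points \<Longrightarrow> g p \<in> (pg_points :: ('a::{finite,field}^3) set set)"
  using pgl_rep coll.g_P by metis

lemma pgl_bij: "g \<in> pgl3 \<Longrightarrow> bij_betw g pg_points (pg_points :: ('a::{finite,field}^3) set set)"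
  using pgl_rep coll.g_inj coll.g_surj unfolding bij_betw_def by metis

lemma M_formula:
  assumes "g \<in> pgl3"
  shows "M_apply v g = (\<Sum>x\<in>pg_points. v (x, g x))"
proof -
  have "M_apply v g = (\<Sum>x\<in>pg_points. \<Sum>y\<in>pg_points. Mmat g (x,y) * v (x,y))"
    unfolding M_apply_def by (simp add: sum.cartesian_product)
  also have "\<dots> = (\<Sum>x\<in>pg_points. \<Sum>y\<in>pg_points. if g x = y then v (x,y) else 0)"
    by (intro sum.cong refl) (auto simp: Mmat_def)
  also have "\<dots> = (\<Sum>x\<in>pg_points. v (x, g x))"
    by (intro sum.cong refl) (simp add: pgl_P[OF assms])
  finally show ?thesis .
qed

lemma M_linear_diff: "M_apply (f - h) g = M_apply f g - M_apply h g"
  unfolding M_apply_def by (simp add: right_diff_distrib sum_subtractf)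

lemma M_zero: "M_apply 0 g = 0"
  unfolding M_apply_def by simp
lemma M_add: "M_apply (f + h) g = M_apply f g + M_apply h g"
  unfolding M_apply_def by (simp add: distrib_left sum.distrib)
lemma M_scale: "M_apply (cscale c f) g = c * M_apply f g"
  unfolding M_apply_def cscale_def by (simp add: sum_distrib_left mult.left_commute)

lemma cscale_apply: "cscale c f x = c * f x"
  by (simp add: cscale_def)

lemma rk_subspace: "cs.subspace right_kernel_M"
  unfolding cs.subspace_def right_kernel_M_def
  by (simp add: M_zero M_add M_scale cscale_apply)

lemma der_props: "g \<in> derangements \<Longrightarrow> g \<in> pgl3 \<and> (\<forall>\<alpha>\<in>pg_points. g \<alpha> \<noteq> \<alpha>)"
  by (simp add: derangements_def)

lemma der_line:
  assumes "g \<in> (derangements :: (('a::{finite,field}^3) set \<Rightarrow> _) set)" "l \<in> pg_lines"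
  shows "card {x \<in> l. g x \<in> l} = 1"
proof -
  obtain A B where c: "coll A B" "g = coll.gg A" using pgl_rep[OF conjunct1[OF der_props[OF assms(1)]]] by blast
  have "\<forall>p\<in>pg_points. coll.gg A p \<noteq> p" using der_props[OF assms(1)] c(2) by simp
  hence "card {x \<in> l. coll.gg A x \<in> l} = 1" by (rule coll.derange_line[OF c(1) _ assms(2)])
  thus ?thesis using c(2) by simp
qed

lemma M_pair: "g \<in> derangements \<Longrightarrow> a \<in> pg_points \<Longrightarrow> M_apply (e_pair a a) g = 0"
proof -
  assume g: "g \<in> derangements" and a: "a \<in> pg_points"
  show ?thesis
    unfolding M_formula[OF conjunct1[OF der_props[OF g]]]
    using der_props[OF g] a by (intro sum.neutral) (auto simp: e_pair_def)
qed

lemma M_e1: "g \<in> derangements \<Longrightarrow> a \<in> pg_points \<Longrightarrow> M_apply (e1 a) g = 1"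
proof -
  assume g: "g \<in> derangements" and a: "a \<in> pg_points"
  have "M_apply (e1 a) g = (\<Sum>x\<in>pg_points. if x = a then 1 else 0)"
    unfolding M_formula[OF conjunct1[OF der_props[OF g]]]
    by (intro sum.cong refl) (simp add: e1_def pgl_P[OF conjunct1[OF der_props[OF g]]])
  thus ?thesis using a by simp
qed

lemma M_e2: "g \<in> derangements \<Longrightarrow> a \<in> pg_points \<Longrightarrow> M_apply (e2 a) g = 1"
proof -
  assume g: "g \<in> derangements" and a: "a \<in> pg_points"
  have bij: "bij_betw g pg_points pg_points" using der_props[OF g] pgl_bij by blast
  have "M_apply (e2 a) g = (\<Sum>x\<in>pg_points. if g x = a then 1 else 0)"
    unfolding M_formula[OF conjunct1[OF der_props[OF g]]]
    by (intro sum.cong refl) (simp add: e2_def)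
  also have "\<dots> = (\<Sum>y\<in>pg_points. if y = a then 1 else 0)"
    using sum.reindex_bij_betw[OF bij, of "\<lambda>y. if y = a then (1::complex) else 0"] by simp
  finally show ?thesis using a by simp
qed

lemma M_line: "g \<in> derangements \<Longrightarrow> l \<in> pg_lines \<Longrightarrow> M_apply (e_line l) g = 1"
proof -
  assume g: "g \<in> derangements" and l: "l \<in> pg_lines"
  have "M_apply (e_line l) g = (\<Sum>x\<in>pg_points. if x \<in> {x \<in> l. g x \<in> l} then 1 else 0)"
    unfolding M_formula[OF conjunct1[OF der_props[OF g]]]
    by (intro sum.cong refl) (simp add: e_line_def)
  also have "\<dots> = of_nat (card (pg_points \<inter> {x \<in> l. g x \<in> l}))"
    by (simp add: sum.If_cases)
  also have "pg_points \<inter> {x \<in> l. g x \<in> l} = {x \<in> l. g x \<in> l}" using line_sub[OF l] by blast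
  finally show ?thesis using der_line[OF g l] by simp
qed

lemma rk_mem: "(\<And>x y. (x,y) \<notin> pg_points \<times> pg_points \<Longrightarrow> v (x,y) = 0) \<Longrightarrow> (\<And>g. g \<in> derangements \<Longrightarrow> M_apply v g = 0) \<Longrightarrow> v \<in> right_kernel_M"
  unfolding right_kernel_M_def by auto

lemma gens_rk:
  assumes ab: "\<alpha>b \<in> pg_points" and lb: "lb \<in> pg_lines"
  shows "({e_pair \<alpha> \<alpha> | \<alpha>. \<alpha> \<in> pg_points}
      \<union> {e1 \<alpha>b - e1 \<alpha> | \<alpha>. \<alpha> \<in> pg_points}
      \<union> {e2 \<alpha>b - e2 \<alpha> | \<alpha>. \<alpha> \<in> pg_points}
      \<union> {e_line lb - e_line l | l. l \<in> pg_lines}) \<subseteq> (right_kernel_M :: ('a::{finite,field}) Vsp set)"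
proof -
  have sub: "l \<subseteq> pg_points" if "l \<in> pg_lines" for l :: "('a^3) set set" using line_sub that .
  have 1: "e_pair \<alpha> \<alpha> \<in> (right_kernel_M :: 'a Vsp set)" if "\<alpha> \<in> pg_points" for \<alpha>
  proof (intro rk_mem)
    fix x y :: "('a^3) set" assume "(x,y) \<notin> pg_points \<times> pg_points"
    thus "e_pair \<alpha> \<alpha> (x,y) = 0" using that by (auto simp: e_pair_def)
  next
    fix g assume "g \<in> (derangements :: (('a^3) set \<Rightarrow> _) set)"
    thus "M_apply (e_pair \<alpha> \<alpha>) g = 0" using that by (simp add: M_pair)
  qed
  have 2: "e1 \<alpha>b - e1 \<alpha> \<in> (right_kernel_M :: 'a Vsp set)" if "\<alpha> \<in> pg_points" for \<alpha>
  proof (intro rk_mem)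
    fix x y :: "('a^3) set" assume "(x,y) \<notin> pg_points \<times> pg_points"
    thus "(e1 \<alpha>b - e1 \<alpha>) (x,y) = 0" using that ab by (auto simp: e1_def)
  next
    fix g assume "g \<in> (derangements :: (('a^3) set \<Rightarrow> _) set)"
    thus "M_apply (e1 \<alpha>b - e1 \<alpha>) g = 0" using that ab by (simp add: M_linear_diff M_e1)
  qed
  have 3: "e2 \<alpha>b - e2 \<alpha> \<in> (right_kernel_M :: 'a Vsp set)" if "\<alpha> \<in> pg_points" for \<alpha>
  proof (intro rk_mem)
    fix x y :: "('a^3) set" assume "(x,y) \<notin> pg_points \<times> pg_points"
    thus "(e2 \<alpha>b - e2 \<alpha>) (x,y) = 0" using that ab by (auto simp: e2_def)
  next
    fix g assume "g \<in> (derangements :: (('a^3) set \<Rightarrow> _) set)"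
    thus "M_apply (e2 \<alpha>b - e2 \<alpha>) g = 0" using that ab by (simp add: M_linear_diff M_e2)
  qed
  have 4: "e_line lb - e_line l \<in> (right_kernel_M :: 'a Vsp set)" if "l \<in> pg_lines" for l
  proof (intro rk_mem)
    fix x y :: "('a^3) set" assume "(x,y) \<notin> pg_points \<times> pg_points"
    thus "(e_line lb - e_line l) (x,y) = 0" using sub[OF lb] sub[OF that] by (auto simp: e_line_def)
  next
    fix g assume "g \<in> (derangements :: (('a^3) set \<Rightarrow> _) set)"
    thus "M_apply (e_line lb - e_line l) g = 0" using that lb by (simp add: M_linear_diff M_line)
  qed
  show ?thesis using 1 2 3 4 by blast
qed



lemma (in vector_space) indep_family:
  assumes fin: "finite I" and H: "\<And>c. (\<Sum>i\<in>I. scale (c i) (F i)) = 0 \<Longrightarrow> \<forall>i\<in>I. c i = 0"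
  shows "independent (F ` I) \<and> card (F ` I) = card I"
proof -
  have inj: "inj_on F I"
  proof (rule inj_onI, rule ccontr)
    fix i j assume ij: "i \<in> I" "j \<in> I" "F i = F j" "i \<noteq> j"
    define c where "c k = (if k = i then 1 else if k = j then -1 else (0::'a))" for k
    have "\<forall>k. scale (c k) (F k) = (if k = i then F i else 0) - (if k = j then F j else 0)"
      using ij by (auto simp: c_def)
    hence "(\<Sum>k\<in>I. scale (c k) (F k)) = (\<Sum>k\<in>I. (if k = i then F i else 0) - (if k = j then F j else 0))"
      by simp
    also have "\<dots> = (\<Sum>k\<in>I. if k = i then F i else 0) - (\<Sum>k\<in>I. if k = j then F j else 0)"
      by (rule sum_subtractf)
    also have "\<dots> = F i - F j" using ij fin by simp
    also have "\<dots> = 0" using ij by simp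
    finally have "\<forall>k\<in>I. c k = 0" by (rule H)
    thus False using ij by (auto simp: c_def)
  qed
  have "\<not> dependent (F ` I)"
  proof
    assume "dependent (F ` I)"
    then obtain c where c: "\<exists>v\<in>F ` I. c v \<noteq> 0" "(\<Sum>v\<in>F ` I. scale (c v) v) = 0"
      using dependent_finite[of "F ` I"] fin by auto
    hence "(\<Sum>i\<in>I. scale (c (F i)) (F i)) = 0" by (simp add: sum.reindex[OF inj])
    hence "\<forall>i\<in>I. c (F i) = 0" by (rule H)
    thus False using c(1) by blast
  qed
  thus ?thesis using inj by (simp add: card_image)
qed

lemma sum_ind:
  assumes "finite S"
  shows "(\<Sum>a\<in>S. b a * ((if Q then 1 else 0) - (if a = t then 1 else 0))) =
         (if Q then sum b S else 0) - (if t \<in> S then b t else (0::complex))"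
proof -
  have "(\<Sum>a\<in>S. b a * ((if Q then 1 else 0) - (if a = t then 1 else 0))) =
        (\<Sum>a\<in>S. (if Q then b a else 0)) - (\<Sum>a\<in>S. (if a = t then b a else 0))"
    by (simp add: sum_subtractf[symmetric] right_diff_distrib if_distrib cong: if_cong)
  also have "\<dots> = (if Q then sum b S else 0) - (if t \<in> S then b t else 0)"
    using assms by simp
  finally show ?thesis .
qed

lemma comb_const:
  fixes f g :: "('a::{finite,field}^3) set \<Rightarrow> complex" and k :: "('a^3) set set \<Rightarrow> complex"
  assumes E: "\<And>x y l. x \<in> pg_points \<Longrightarrow> y \<in> pg_points \<Longrightarrow> x \<noteq> y \<Longrightarrow> l \<in> pg_lines \<Longrightarrow> x \<in> l \<Longrightarrow> y \<in> l \<Longrightarrow> f x + g y + k l = 0"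
  shows "\<And>x x'. x \<in> pg_points \<Longrightarrow> x' \<in> pg_points \<Longrightarrow> f x = f x'"
    and "\<And>y y'. y \<in> pg_points \<Longrightarrow> y' \<in> pg_points \<Longrightarrow> g y = g y'"
proof -
  fix x x' :: "('a^3) set" assume x: "x \<in> pg_points" "x' \<in> pg_points"
  show "f x = f x'"
  proof (cases "x = x'")
    case False
    obtain l where l: "l \<in> pg_lines" "x \<in> l" "x' \<in> l" using two_pts_line[OF x False] by blast
    obtain z where z: "z \<in> l" "z \<noteq> x" "z \<noteq> x'" using third_point[OF l(1)] by blast
    have zP: "z \<in> pg_points" using line_sub[OF l(1)] z(1) by blast
    have "f x + g z + k l = 0" using E[OF x(1) zP z(2)[symmetric] l(1) l(2) z(1)] .
    moreover have "f x' + g z + k l = 0" using E[OF x(2) zP z(3)[symmetric] l(1) l(3) z(1)] .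
    ultimately have "f x + (g z + k l) = f x' + (g z + k l)" by (simp add: add.assoc)
    thus ?thesis by simp
  qed simp
next
  fix y y' :: "('a^3) set" assume y: "y \<in> pg_points" "y' \<in> pg_points"
  show "g y = g y'"
  proof (cases "y = y'")
    case False
    obtain l where l: "l \<in> pg_lines" "y \<in> l" "y' \<in> l" using two_pts_line[OF y False] by blast
    obtain z where z: "z \<in> l" "z \<noteq> y" "z \<noteq> y'" using third_point[OF l(1)] by blast
    have zP: "z \<in> pg_points" using line_sub[OF l(1)] z(1) by blast
    have "f z + g y + k l = 0" using E[OF zP y(1) z(2) l(1) z(1) l(2)] .
    moreover have "f z + g y' + k l = 0" using E[OF zP y(2) z(3) l(1) z(1) l(3)] .
    ultimately have "f z + g y + k l = f z + g y' + k l" by simp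
    thus ?thesis by simp
  qed simp
qed

lemma coef_zero:
  fixes b :: "('a::{finite,field}^3) set \<Rightarrow> complex"
  assumes ab: "ab \<in> pg_points"
    and const: "\<And>x x'. x \<in> pg_points \<Longrightarrow> x' \<in> pg_points \<Longrightarrow> f x = f x'"
    and fdef: "\<And>x. f x = (if x = ab then sum b (pg_points - {ab}) else 0) - (if x \<in> pg_points - {ab} then b x else 0)"
  shows "\<forall>x\<in>pg_points - {ab}. b x = 0" and "\<forall>x\<in>pg_points. f x = 0"
proof -
  let ?S = "pg_points - {ab}" and ?B = "sum b (pg_points - {ab})"
  have fab: "f ab = ?B" using fdef[of ab] by simp
  have bx: "b x = - ?B" if xS: "x \<in> ?S" for x
  proof -
    have e1: "f x = - b x" using xS fdef[of x] by simp
    have e2: "f x = ?B" using const[of x ab] xS ab fab by simp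
    from e1 e2 show ?thesis by (metis minus_minus)
  qed
  have "?B = (\<Sum>x\<in>?S. - ?B)" by (rule sum.cong[OF refl bx])
  also have "\<dots> = - (of_nat (card ?S) * ?B)" by simp
  finally have eq: "?B = - (of_nat (card ?S) * ?B)" .
  have "(1 + of_nat (card ?S)) * ?B = ?B + of_nat (card ?S) * ?B" by (simp add: distrib_right)
  also have "\<dots> = 0" using eq by (simp add: eq_neg_iff_add_eq_0)
  finally have "(1 + of_nat (card ?S)) * ?B = 0" .
  moreover have "(1 + of_nat (card ?S) :: complex) \<noteq> 0"
  proof -
    have "of_nat (Suc (card ?S)) \<noteq> (0::complex)" by (rule of_nat_neq_0)
    thus ?thesis unfolding of_nat_Suc .
  qed
  ultimately have B0: "?B = 0" by simp
  show "\<forall>x\<in>?S. b x = 0" using bx B0 by (metis neg_0_equal_iff_equal)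
  show "\<forall>x\<in>pg_points. f x = 0"
  proof
    fix x :: "('a^3) set" assume x: "x \<in> pg_points"
    have "f x = f ab" by (rule const[OF x ab])
    thus "f x = 0" using fab B0 by simp
  qed
qed



datatype ('p,'l) gidx = Dg 'p | Rg 'p | Cg 'p | Lg 'l

definition FF :: "('a::field^3) set \<Rightarrow> ('a^3) set set \<Rightarrow> (('a^3) set, ('a^3) set set) gidx \<Rightarrow> 'a Vsp" where
  "FF ab lb i = (case i of Dg a \<Rightarrow> e_pair a a | Rg a \<Rightarrow> e1 ab - e1 a | Cg a \<Rightarrow> e2 ab - e2 a
                 | Lg l \<Rightarrow> e_line lb - e_line l)"

definition II :: "('a::field^3) set \<Rightarrow> ('a^3) set set \<Rightarrow> (('a^3) set, ('a^3) set set) gidx set" where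
  "II ab lb = Dg ` pg_points \<union> Rg ` (pg_points - {ab}) \<union> Cg ` (pg_points - {ab}) \<union> Lg ` (pg_lines - {lb})"

lemma sum_II:
  fixes \<phi> :: "(('a::{finite,field}^3) set, ('a^3) set set) gidx \<Rightarrow> complex"
  shows "(\<Sum>i\<in>II ab lb. \<phi> i) = (\<Sum>a\<in>pg_points. \<phi> (Dg a)) + (\<Sum>a\<in>pg_points - {ab}. \<phi> (Rg a))
     + (\<Sum>a\<in>pg_points - {ab}. \<phi> (Cg a)) + (\<Sum>l\<in>pg_lines - {lb}. \<phi> (Lg l))"
proof -
  have i1: "inj_on Dg X" "inj_on Rg X" "inj_on Cg X" "inj_on Lg Y" for X Y by (auto intro: inj_onI)
  have "(\<Sum>i\<in>II ab lb. \<phi> i) = (\<Sum>i\<in>Dg ` pg_points. \<phi> i) + (\<Sum>i\<in>Rg ` (pg_points - {ab}). \<phi> i)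
     + (\<Sum>i\<in>Cg ` (pg_points - {ab}). \<phi> i) + (\<Sum>i\<in>Lg ` (pg_lines - {lb}). \<phi> i)"
    unfolding II_def by (subst sum.union_disjoint, simp, simp, fastforce)+ simp
  thus ?thesis by (simp add: sum.reindex i1)
qed

lemma card_II:
  assumes "ab \<in> pg_points" "lb \<in> pg_lines"
  shows "card (II ab (lb :: ('a::{finite,field}^3) set set)) = 4 * (CARD('a)^2 + CARD('a)) + 1"
proof -
  have i1: "inj_on Dg X" "inj_on Rg X" "inj_on Cg X" "inj_on Lg Y" for X Y by (auto intro: inj_onI)
  have "card (II ab lb) = card (pg_points :: ('a^3) set set) + (card (pg_points :: ('a^3) set set) - 1)
     + (card (pg_points :: ('a^3) set set) - 1) + (card (pg_lines :: ('a^3) set set set) - 1)"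
    unfolding II_def by (subst card_Un_disjoint, simp, simp, fastforce)+
      (use assms in \<open>simp add: card_image i1 card_Diff_singleton\<close>)
  also have "\<dots> = 4 * (CARD('a)^2 + CARD('a)) + 1" by (simp add: card_points card_lines)
  finally show ?thesis .
qed

lemma span_V0:
  assumes ab: "ab \<in> pg_points" and lb: "lb \<in> pg_lines"
  shows "V0 ab lb = cs.span (FF ab lb ` II ab (lb :: ('a::{finite,field}^3) set set))"
proof -
  let ?G = "{e_pair \<alpha> \<alpha> | \<alpha>. \<alpha> \<in> pg_points}
      \<union> {e1 ab - e1 \<alpha> | \<alpha>. \<alpha> \<in> pg_points}
      \<union> {e2 ab - e2 \<alpha> | \<alpha>. \<alpha> \<in> pg_points}
      \<union> {e_line lb - e_line l | l. l \<in> pg_lines}"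
  have s1: "FF ab lb ` II ab lb \<subseteq> ?G"
    unfolding II_def FF_def by auto
  have s2: "?G \<subseteq> insert 0 (FF ab lb ` II ab lb)"
  proof
    fix v assume "v \<in> ?G"
    then consider (D) \<alpha> where "\<alpha> \<in> pg_points" "v = e_pair \<alpha> \<alpha>"
      | (R) \<alpha> where "\<alpha> \<in> pg_points" "v = e1 ab - e1 \<alpha>"
      | (C) \<alpha> where "\<alpha> \<in> pg_points" "v = e2 ab - e2 \<alpha>"
      | (L) l where "l \<in> pg_lines" "v = e_line lb - e_line l" by blast
    thus "v \<in> insert 0 (FF ab lb ` II ab lb)"
    proof cases
      case D thus ?thesis unfolding II_def by (auto simp: FF_def image_iff intro!: bexI[of _ "Dg \<alpha>"])
    next
      case R thus ?thesis unfolding II_def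
        by (cases "\<alpha> = ab") (auto simp: FF_def image_iff intro!: bexI[of _ "Rg \<alpha>"])
    next
      case C thus ?thesis unfolding II_def
        by (cases "\<alpha> = ab") (auto simp: FF_def image_iff intro!: bexI[of _ "Cg \<alpha>"])
    next
      case L thus ?thesis unfolding II_def
        by (cases "l = lb") (auto simp: FF_def image_iff intro!: bexI[of _ "Lg l"])
    qed
  qed
  have "cs.span ?G = cs.span (FF ab lb ` II ab lb)"
  proof
    show "cs.span ?G \<subseteq> cs.span (FF ab lb ` II ab lb)"
      using cs.span_mono[OF s2] by simp
    show "cs.span (FF ab lb ` II ab lb) \<subseteq> cs.span ?G"
      using cs.span_mono[OF s1] .
  qed
  thus ?thesis unfolding V0_def .
qed



lemma finII: "finite (II ab (lb :: ('a::{finite,field}^3) set set))"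
  unfolding II_def by simp

lemma key:
  assumes ab: "ab \<in> pg_points" and lb: "lb \<in> pg_lines"
    and S: "(\<Sum>i\<in>II ab lb. cscale (c i) (FF ab lb i)) = 0"
  shows "\<forall>i\<in>II ab (lb :: ('a::{finite,field}^3) set set). c i = 0"
proof -
  define d where "d a = c (Dg a)" for a
  define b where "b a = c (Rg a)" for a
  define cc where "cc a = c (Cg a)" for a
  define h where "h l = c (Lg l)" for l
  let ?P = "pg_points :: ('a^3) set set" and ?L = "pg_lines :: ('a^3) set set set"
  have E: "(\<Sum>a\<in>?P. d a * e_pair a a (x,y)) + (\<Sum>a\<in>?P-{ab}. b a * (e1 ab (x,y) - e1 a (x,y)))
     + (\<Sum>a\<in>?P-{ab}. cc a * (e2 ab (x,y) - e2 a (x,y)))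
     + (\<Sum>l\<in>?L-{lb}. h l * (e_line lb (x,y) - e_line l (x,y))) = 0" for x y
  proof -
    have "(\<Sum>i\<in>II ab lb. cscale (c i) (FF ab lb i)) (x,y) = 0" using S by simp
    hence "(\<Sum>i\<in>II ab lb. c i * FF ab lb i (x,y)) = 0" by (simp add: sum_apply_fun[OF finII] cscale_apply)
    thus ?thesis by (simp add: sum_II FF_def d_def b_def cc_def h_def)
  qed
  define B where "B = sum b (?P - {ab})"
  define C where "C = sum cc (?P - {ab})"
  define H where "H = sum h (?L - {lb})"
  define f where "f x = (if x = ab then B else 0) - (if x \<in> ?P - {ab} then b x else 0)" for x
  define g where "g x = (if x = ab then C else 0) - (if x \<in> ?P - {ab} then cc x else 0)" for x
  define k where "k l = (if l = lb then H else 0) - (if l \<in> ?L - {lb} then h l else 0)" for l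
  have offd: "f x + g y + k l = 0"
    if xy: "x \<in> ?P" "y \<in> ?P" "x \<noteq> y" "l \<in> ?L" "x \<in> l" "y \<in> l" for x y l
  proof -
    have t1: "(\<Sum>a\<in>?P. d a * e_pair a a (x,y)) = 0" using xy(3) by (intro sum.neutral) (auto simp: e_pair_def)
    have "(\<Sum>a\<in>?P-{ab}. b a * (e1 ab (x,y) - e1 a (x,y)))
        = (\<Sum>a\<in>?P-{ab}. b a * ((if x = ab then 1 else 0) - (if a = x then 1 else 0)))"
      using xy by (intro sum.cong refl) (auto simp: e1_def)
    also have "\<dots> = f x" by (simp add: sum_ind f_def B_def)
    finally have t2: "(\<Sum>a\<in>?P-{ab}. b a * (e1 ab (x,y) - e1 a (x,y))) = f x" .
    have "(\<Sum>a\<in>?P-{ab}. cc a * (e2 ab (x,y) - e2 a (x,y)))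
        = (\<Sum>a\<in>?P-{ab}. cc a * ((if y = ab then 1 else 0) - (if a = y then 1 else 0)))"
      using xy by (intro sum.cong refl) (auto simp: e2_def)
    also have "\<dots> = g y" by (simp add: sum_ind g_def C_def)
    finally have t3: "(\<Sum>a\<in>?P-{ab}. cc a * (e2 ab (x,y) - e2 a (x,y))) = g y" .
    have lu: "(x \<in> l' \<and> y \<in> l') \<longleftrightarrow> l' = l" if "l' \<in> ?L" for l'
      using line_unique[OF xy(1,2,3) that xy(4)] xy(5,6) by blast
    have "(\<Sum>l'\<in>?L-{lb}. h l' * (e_line lb (x,y) - e_line l' (x,y)))
        = (\<Sum>l'\<in>?L-{lb}. h l' * ((if l = lb then 1 else 0) - (if l' = l then 1 else 0)))"
    proof (intro sum.cong refl)
      fix l' assume "l' \<in> ?L - {lb}"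
      hence "l' \<in> ?L" by simp
      thus "h l' * (e_line lb (x,y) - e_line l' (x,y)) = h l' * ((if l = lb then 1 else 0) - (if l' = l then 1 else 0))"
        using lu[OF lb] lu[of l'] by (auto simp: e_line_def)
    qed
    also have "\<dots> = k l" by (simp add: sum_ind k_def H_def)
    finally have t4: "(\<Sum>l'\<in>?L-{lb}. h l' * (e_line lb (x,y) - e_line l' (x,y))) = k l" .
    show ?thesis using E[of x y] t1 t2 t3 t4 by simp
  qed
  note cst = comb_const[of f g k, OF offd]
  have fdef: "f x = (if x = ab then sum b (?P - {ab}) else 0) - (if x \<in> ?P - {ab} then b x else 0)" for x
    by (simp add: f_def B_def)
  have gdef: "g x = (if x = ab then sum cc (?P - {ab}) else 0) - (if x \<in> ?P - {ab} then cc x else 0)" for x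
    by (simp add: g_def C_def)
  have b0: "\<forall>x\<in>?P - {ab}. b x = 0" and f0: "\<forall>x\<in>?P. f x = 0"
    using coef_zero[of ab f b, OF ab cst(1) fdef] by auto
  have cc0: "\<forall>x\<in>?P - {ab}. cc x = 0" and g0: "\<forall>x\<in>?P. g x = 0"
    using coef_zero[of ab g cc, OF ab cst(2) gdef] by auto
  have h0: "\<forall>l\<in>?L - {lb}. h l = 0"
  proof
    fix l assume l: "l \<in> ?L - {lb}"
    have "card l = CARD('a) + 1" using l lines_card by blast
    hence "l \<noteq> {}" by auto
    then obtain x where x: "x \<in> l" by blast
    obtain y where y: "y \<in> l" "y \<noteq> x" using third_point[of l x x] l by blast
    have xyP: "x \<in> ?P" "y \<in> ?P" using x y line_sub l by blast+
    have "f x + g y + k l = 0" using offd[OF xyP y(2)[symmetric] _ x y(1)] l by simp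
    hence "k l = 0" using f0 g0 xyP by simp
    thus "h l = 0" using l by (simp add: k_def)
  qed
  have d0: "\<forall>x\<in>?P. d x = 0"
  proof
    fix x assume x: "x \<in> ?P"
    have t1: "(\<Sum>a\<in>?P. d a * e_pair a a (x,x)) = d x"
    proof -
      have "(\<Sum>a\<in>?P. d a * e_pair a a (x,x)) = (\<Sum>a\<in>?P. if a = x then d a else 0)"
        by (intro sum.cong refl) (auto simp: e_pair_def)
      also have "\<dots> = d x" using x by simp
      finally show ?thesis .
    qed
    have t2: "(\<Sum>a\<in>?P-{ab}. b a * (e1 ab (x,x) - e1 a (x,x))) = 0" using b0 by (intro sum.neutral) simp
    have t3: "(\<Sum>a\<in>?P-{ab}. cc a * (e2 ab (x,x) - e2 a (x,x))) = 0" using cc0 by (intro sum.neutral) simp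
    have t4: "(\<Sum>l\<in>?L-{lb}. h l * (e_line lb (x,x) - e_line l (x,x))) = 0" using h0 by (intro sum.neutral) simp
    show "d x = 0" using E[of x x] t1 t2 t3 t4 by simp
  qed
  show ?thesis using d0 b0 cc0 h0 unfolding II_def d_def b_def cc_def h_def by auto
qed

lemma rk_kN: "right_kernel_M \<subseteq> kernel_N"
  unfolding right_kernel_M_def kernel_N_def N_apply_def by auto

theorem mainTheorem11:
  fixes \<alpha>b :: "('a::{finite,field}^3) set" and lb :: "('a^3) set set"
  assumes "\<alpha>b \<in> pg_points" and "lb \<in> pg_lines"
  shows "vector_space.dim cscale (V0 \<alpha>b lb) = 4 * (CARD('a)^2 + CARD('a)) + 1
         \<and> V0 \<alpha>b lb \<subseteq> right_kernel_M
         \<and> V0 \<alpha>b lb \<subseteq> kernel_N"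
proof -
  have ind: "\<not> cs.dependent (FF \<alpha>b lb ` II \<alpha>b lb) \<and> card (FF \<alpha>b lb ` II \<alpha>b lb) = card (II \<alpha>b lb)"
    by (rule cs.indep_family[OF finII]) (rule key[OF assms])
  have d: "cs.dim (V0 \<alpha>b lb) = 4 * (CARD('a)^2 + CARD('a)) + 1"
    using span_V0[OF assms] cs.dim_span_eq_card_independent[of "FF \<alpha>b lb ` II \<alpha>b lb"] ind card_II[OF assms]
    by simp
  have r: "V0 \<alpha>b lb \<subseteq> right_kernel_M"
    unfolding V0_def by (rule cs.span_minimal[OF gens_rk[OF assms] rk_subspace])
  show ?thesis using d r rk_kN by blast
qed


end
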